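(* Let $L\subset\mathbb{Z}^m$ be a non-zero lattice with $L\cap\mathbb{N}^m=\{\mathbf 0\}$ and $\mathrm{Sat}(L)=\ker_{\mathbb{Z}}(\mathcal{A})$. If $E\in\mathcal{T}_{\min}$, then (1) there is no circuit $\mathbf x^{\mathbf u_+}-\mathbf x^{\mathbf u_-}\in I_{\mathcal{A}}$ with $\mathrm{supp}(\mathbf x^{\mathbf u_+})\subsetneq E$ or $\mathrm{supp}(\mathbf x^{\mathbf u_-})\subsetneq E$; and (2) there exists a circuit $\mathbf x^{\mathbf u_+}-\mathbf x^{\mathbf u_-}\in I_{\mathcal{A}}$ with $\mathrm{supp}(\mathbf x^{\mathbf u_+})=E$ or $\mathrm{supp}(\mathbf x^{\mathbf u_-})=E$.
   Context: $K$ is a field, $\mathbf x^{\mathbf u}=x_1^{u_1}\cdots x_m^{u_m}$, and $\mathbf u_\pm$ are the positive/negative parts of $\mathbf u\in\mathbb{Z}^m$. $I_L=(\mathbf x^{\mathbf u_+}-\mathbf x^{\mathbf u_-}:\mathbf u\in L)\subset K[x_1,\ldots,x_m]$; $\mathrm{Sat}(L)=\{\mathbf u: d\mathbf u\in L\text{ for some nonzero } d\in\mathbb{Z}\}$; $\mathcal{A}=\{\mathbf a_1,\ldots,\mathbf a_m\}\subset\mathbb{Z}^n$, $\ker_{\mathbb{Z}}(\mathcal{A})=\{\mathbf q\in\mathbb{Z}^m:\sum q_i\mathbf a_i=0\}$, and $I_{\mathcal{A}}=I_{\ker_{\mathbb{Z}}(\mathcal{A})}$. A circuit is a nonzero $\mathbf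 u\in\ker_{\mathbb{Z}}(\mathcal{A})$ whose support $\mathrm{supp}(\mathbf u)=\{i:u_i\ne0\}$ is inclusion-minimal among nonzero vectors of $\ker_{\mathbb{Z}}(\mathcal{A})$ and whose coordinates are relatively prime; the binomial $\mathbf x^{\mathbf u_+}-\mathbf x^{\mathbf u_-}$ is then also called a circuit. $\mathrm{supp}(\mathbf x^{\mathbf w})=\mathrm{supp}(\mathbf w)$. A monomial $M$ is indispensable of $I_L$ if every system of binomial generators of $I_L$ contains a binomial having $M$ as a monomial. $\mathcal{T}_{\min}$ is the set of inclusion-minimal elements of the set of supports of indispensable monomials of $I_L$. *)

theory Defs
  imports Main "HOL-Library.Poly_Mapping" "HOL-Library.Function_Algebras"
begin

text \<open>Variables x_i are indexed by a finite type 'v (so m = CARD('v)); integer vectors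
  in Z^m are functions 'v => int. Polynomials in K[x_1..x_m] are ('v =>0 nat) =>0 'k.\<close>

type_synonym ('v,'k) mpoly = "('v \<Rightarrow>\<^sub>0 nat) \<Rightarrow>\<^sub>0 'k"

definition pos_part :: "('v \<Rightarrow> int) \<Rightarrow> 'v \<Rightarrow> nat" where
  "pos_part u = (\<lambda>i. nat (u i))"

definition neg_part :: "('v \<Rightarrow> int) \<Rightarrow> 'v \<Rightarrow> nat" where
  "neg_part u = (\<lambda>i. nat (- u i))"

definition vsupp :: "('v \<Rightarrow> 'a::zero) \<Rightarrow> 'v set" where
  "vsupp u = {i. u i \<noteq> 0}"

definition monom_c :: "('v::finite \<Rightarrow> nat) \<Rightarrow> 'k::zero \<Rightarrow> ('v,'k) mpoly" where
  "monom_c w c = Poly_Mapping.single (Abs_poly_mapping w) c"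

definition binom :: "('v::finite \<Rightarrow> int) \<Rightarrow> ('v,'k::comm_ring_1) mpoly" where
  "binom u = monom_c (pos_part u) 1 - monom_c (neg_part u) 1"

definition gen_ideal :: "'a::comm_ring_1 set \<Rightarrow> 'a set" where
  "gen_ideal S = {p. \<exists>F c. finite F \<and> F \<subseteq> S \<and> p = (\<Sum>f\<in>F. c f * f)}"

definition is_lattice :: "('v \<Rightarrow> int) set \<Rightarrow> bool" where
  "is_lattice L \<longleftrightarrow> 0 \<in> L \<and> (\<forall>u\<in>L. \<forall>v\<in>L. u + v \<in> L) \<and> (\<forall>u\<in>L. - u \<in> L)"

definition lattice_ideal :: "'k itself \<Rightarrow> ('v::finite \<Rightarrow> int) set \<Rightarrow> ('v,'k::field) mpoly set" where
  "lattice_ideal _ L = gen_ideal {binom u | u. u \<in> L}"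

definition Sat :: "('v \<Rightarrow> int) set \<Rightarrow> ('v \<Rightarrow> int) set" where
  "Sat L = {u. \<exists>d::int. d \<noteq> 0 \<and> (\<lambda>i. d * u i) \<in> L}"

text \<open>A = {a_1,...,a_m} in Z^n, given as a : 'v => ('w => int) with 'w finite (n = CARD('w))\<close>
definition kerZ :: "('v::finite \<Rightarrow> 'w::finite \<Rightarrow> int) \<Rightarrow> ('v \<Rightarrow> int) set" where
  "kerZ a = {q. \<forall>j. (\<Sum>i\<in>UNIV. q i * a i j) = 0}"

definition is_circuit :: "('v::finite \<Rightarrow> 'w::finite \<Rightarrow> int) \<Rightarrow> ('v \<Rightarrow> int) \<Rightarrow> bool" where
  "is_circuit a u \<longleftrightarrow> u \<in> kerZ a \<and> u \<noteq> 0 \<and>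
     \<not> (\<exists>v\<in>kerZ a. v \<noteq> 0 \<and> vsupp v \<subset> vsupp u) \<and> Gcd (range u) = 1"

definition is_binomial :: "('v::finite,'k::field) mpoly \<Rightarrow> bool" where
  "is_binomial f \<longleftrightarrow> (\<exists>u v c d. f = monom_c u c + monom_c v d)"

definition indispensable_monomial :: "'k::field itself \<Rightarrow> ('v::finite \<Rightarrow> int) set \<Rightarrow> ('v \<Rightarrow> nat) \<Rightarrow> bool" where
  "indispensable_monomial K L w \<longleftrightarrow>
     (\<forall>B::('v,'k) mpoly set. (\<forall>b\<in>B. is_binomial b) \<and> gen_ideal B = lattice_ideal K L \<longrightarrow>
        (\<exists>b\<in>B. Poly_Mapping.lookup b (Abs_poly_mapping w) \<noteq> 0))"

definition T_min :: "'k::field itself \<Rightarrow> ('v::finite \<Rightarrow> int) set \<Rightarrow> 'v set set" where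
  "T_min K L = (let S = {vsupp w | w. indispensable_monomial K L w} in
      {E \<in> S. \<not> (\<exists>E'\<in>S. E' \<subset> E)})"

end

theory Submission
  imports Defs "HOL.Rat"
begin


definition ivec :: "('v \<Rightarrow>\<^sub>0 nat) \<Rightarrow> 'v \<Rightarrow> int" where
  "ivec a = (\<lambda>i. int (Poly_Mapping.lookup a i))"

definition inC :: "('v \<Rightarrow> int) set \<Rightarrow> ('v \<Rightarrow>\<^sub>0 nat) \<Rightarrow> ('v \<Rightarrow>\<^sub>0 nat) \<Rightarrow> bool" where
  "inC L a0 a \<longleftrightarrow> ivec a - ivec a0 \<in> L"

definition psi :: "('v \<Rightarrow> int) set \<Rightarrow> ('v \<Rightarrow>\<^sub>0 nat) \<Rightarrow> (('v \<Rightarrow>\<^sub>0 nat) \<Rightarrow>\<^sub>0 'k::comm_ring_1) \<Rightarrow> 'k" where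
  "psi L a0 p = (\<Sum>a\<in>{a\<in>Poly_Mapping.keys p. inC L a0 a}. Poly_Mapping.lookup p a)"

lemma psi_superset:
  assumes "finite S" "Poly_Mapping.keys p \<subseteq> S"
  shows "psi L a0 p = (\<Sum>a\<in>{a\<in>S. inC L a0 a}. Poly_Mapping.lookup p a)"
  unfolding psi_def
  by (rule sum.mono_neutral_left) (use assms in \<open>auto simp: in_keys_iff\<close>)

lemma psi_add: "psi L a0 (p + q) = psi L a0 p + psi L a0 q"
proof -
  let ?S = "Poly_Mapping.keys p \<union> Poly_Mapping.keys q"
  have k: "Poly_Mapping.keys (p+q) \<subseteq> ?S" by (rule keys_add)
  show ?thesis
    using psi_superset[of ?S "p+q" L a0] psi_superset[of ?S p L a0] psi_superset[of ?S q L a0] k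
    by (simp add: lookup_add sum.distrib)
qed

lemma psi_uminus: "psi L a0 (- p) = - psi L a0 p"
  unfolding psi_def by (simp add: sum_negf)

lemma psi_diff: "psi L a0 (p - q) = psi L a0 p - psi L a0 q"
  using psi_add[of L a0 p "-q"] psi_uminus[of L a0 q] by simp

lemma psi_zero[simp]: "psi L a0 0 = 0"
  unfolding psi_def by simp

lemma psi_sum: "psi L a0 (\<Sum>f\<in>F. g f) = (\<Sum>f\<in>F. psi L a0 (g f))"
  by (induction F rule: infinite_finite_induct) (auto simp: psi_add)

lemma psi_single: "psi L a0 (Poly_Mapping.single a c) = (if inC L a0 a then c else 0)"
proof (cases "c = 0 \<or> \<not> inC L a0 a")
  case True
  then have "{aa\<in>Poly_Mapping.keys (Poly_Mapping.single a c). inC L a0 aa} = {}" by auto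
  then show ?thesis using True unfolding psi_def by (simp only: sum.empty) auto
next
  case False
  then have "{aa\<in>Poly_Mapping.keys (Poly_Mapping.single a c). inC L a0 aa} = {a}" by auto
  then show ?thesis using False unfolding psi_def by simp
qed

lemma poly_decomp: "g = (\<Sum>t\<in>Poly_Mapping.keys g. Poly_Mapping.single t (Poly_Mapping.lookup g t))"
proof (rule poly_mapping_eqI)
  fix k
  show "Poly_Mapping.lookup g k = Poly_Mapping.lookup (\<Sum>t\<in>Poly_Mapping.keys g. Poly_Mapping.single t (Poly_Mapping.lookup g t)) k"
    by (simp add: lookup_sum lookup_single when_def in_keys_iff)
qed

lemma finite_supp_fin: "finite {x::'v::finite. f x \<noteq> 0}" by simp

lemma lookup_Abs_fin[simp]: "Poly_Mapping.lookup (Abs_poly_mapping (f::'v::finite \<Rightarrow> 'b::zero)) = f"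
  by simp

lemma pos_neg: "int (pos_part u i) - int (neg_part u i) = u i"
  unfolding pos_part_def neg_part_def by simp

lemma lattice_add: "is_lattice L \<Longrightarrow> x \<in> L \<Longrightarrow> u \<in> L \<Longrightarrow> x + u \<in> L"
  unfolding is_lattice_def by blast
lemma lattice_neg: "is_lattice L \<Longrightarrow> x \<in> L \<Longrightarrow> - x \<in> L"
  unfolding is_lattice_def by blast
lemma lattice_diff: "is_lattice L \<Longrightarrow> x \<in> L \<Longrightarrow> u \<in> L \<Longrightarrow> x - u \<in> L"
  using lattice_add[of L x "-u"] lattice_neg[of L u] by simp

lemma psi_single_binom:
  fixes u :: "'v::finite \<Rightarrow> int"
  assumes "is_lattice L" "u \<in> L"
  shows "psi L a0 (Poly_Mapping.single t c * (binom u :: ('v,'k::comm_ring_1) mpoly)) = 0"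
proof -
  let ?p = "t + Abs_poly_mapping (pos_part u)" and ?n = "t + Abs_poly_mapping (neg_part u)"
  have e: "ivec ?p - ivec a0 = (ivec ?n - ivec a0) + u"
    by (rule ext) (simp add: ivec_def lookup_add algebra_simps flip: pos_neg[of u])
  have "inC L a0 ?p \<longleftrightarrow> inC L a0 ?n"
  proof
    assume "inC L a0 ?p"
    then have "ivec ?p - ivec a0 - u \<in> L" using lattice_diff assms unfolding inC_def by blast
    then show "inC L a0 ?n" unfolding inC_def e by simp
  next
    assume "inC L a0 ?n"
    then show "inC L a0 ?p" using lattice_add assms unfolding inC_def e by blast
  qed
  then show ?thesis
    unfolding binom_def monom_c_def
    by (simp add: right_diff_distrib mult_single psi_diff psi_single)
qed

lemma psi_mult_binom:
  fixes u :: "'v::finite \<Rightarrow> int"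
  assumes "is_lattice L" "u \<in> L"
  shows "psi L a0 (g * (binom u :: ('v,'k::comm_ring_1) mpoly)) = 0"
proof -
  have "g * binom u = (\<Sum>t\<in>Poly_Mapping.keys g. Poly_Mapping.single t (Poly_Mapping.lookup g t) * binom u)"
    by (subst poly_decomp[of g]) (simp add: sum_distrib_right)
  then show ?thesis using psi_single_binom[OF assms, where 'k='k] by (simp add: psi_sum)
qed

lemma psi_ideal:
  assumes "is_lattice L" "p \<in> lattice_ideal TYPE('k::field) L"
  shows "psi L a0 (p :: ('v::finite,'k) mpoly) = 0"
proof -
  from assms(2) obtain F c where F: "finite F" "F \<subseteq> {binom u | u. u \<in> L}" "p = (\<Sum>f\<in>F. c f * f)"
    unfolding lattice_ideal_def gen_ideal_def by blast
  have "\<And>f. f \<in> F \<Longrightarrow> psi L a0 (c f * f) = 0"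
    using F(2) psi_mult_binom[OF assms(1)] by blast
  then show ?thesis using F(3) by (simp add: psi_sum)
qed

lemma inC_refl: "is_lattice L \<Longrightarrow> inC L a a"
  unfolding inC_def is_lattice_def by simp

lemma two_pt:
  assumes L: "is_lattice L" and z: "psi L A (Poly_Mapping.single A c + Poly_Mapping.single B d) = (0::'k::comm_ring_1)"
    and c: "c \<noteq> 0" and AB: "A \<noteq> B"
  shows "\<exists>y\<in>L. y \<noteq> 0 \<and> (\<forall>i. pos_part y i \<le> Poly_Mapping.lookup A i)"
proof -
  have "inC L A B"
  proof (rule ccontr)
    assume "\<not> inC L A B"
    then show False using z c inC_refl[OF L, of A] by (simp add: psi_add psi_single)
  qed
  then have "ivec B - ivec A \<in> L" unfolding inC_def .
  then have y: "ivec A - ivec B \<in> L" using lattice_neg[OF L] by fastforce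
  have "ivec A - ivec B \<noteq> 0"
  proof
    assume "ivec A - ivec B = 0"
    then have "\<And>i. Poly_Mapping.lookup A i = Poly_Mapping.lookup B i"
      unfolding ivec_def by (metis (mono_tags) diff_eq_eq of_nat_eq_iff add_0 fun_diff_def zero_fun_def)
    then show False using AB poly_mapping_eqI by blast
  qed
  moreover have "\<forall>i. pos_part (ivec A - ivec B) i \<le> Poly_Mapping.lookup A i"
    unfolding pos_part_def ivec_def by (simp add: nat_le_iff)
  ultimately show ?thesis using y by blast
qed

lemma binomial_in_ideal:
  assumes L: "is_lattice L" and f: "f \<in> lattice_ideal TYPE('k::field) L"
    and fb: "is_binomial (f :: ('v::finite,'k) mpoly)" and a: "Poly_Mapping.lookup f a \<noteq> 0"
  shows "\<exists>y\<in>L. y \<noteq> 0 \<and> (\<forall>i. pos_part y i \<le> Poly_Mapping.lookup a i)"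
proof -
  from fb obtain u v c d where fe: "f = monom_c u c + monom_c v d" unfolding is_binomial_def by blast
  define U where "U = Abs_poly_mapping u"
  define V where "V = Abs_poly_mapping v"
  have fe2: "f = Poly_Mapping.single U c + Poly_Mapping.single V d"
    unfolding fe monom_c_def U_def V_def ..
  have psi0: "\<And>a0. psi L a0 f = 0" using psi_ideal[OF L f] .
  show ?thesis
  proof (cases "U = V")
    case True
    then have fs: "f = Poly_Mapping.single U (c + d)" using fe2 by (simp add: single_add)
    then have "a = U" "c + d \<noteq> 0" using a by (auto simp: lookup_single when_def split: if_splits)
    moreover have "psi L U f = c + d" using fs inC_refl[OF L] by (simp add: psi_single)
    ultimately show ?thesis using psi0 by simp
  next
    case False
    have la: "Poly_Mapping.lookup f a = (c when U = a) + (d when V = a)"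
      unfolding fe2 by (simp add: lookup_add lookup_single)
    show ?thesis
    proof (cases "a = U")
      case True
      then have "c \<noteq> 0" using a la False by (auto simp: when_def)
      then show ?thesis using two_pt[OF L _ _ False, of c d] psi0[of U] fe2 True by simp
    next
      case aU: False
      then have "a = V" "d \<noteq> 0" using a la by (auto simp: when_def split: if_splits)
      moreover have "psi L V (Poly_Mapping.single V d + Poly_Mapping.single U c) = 0"
        using psi0[of V] fe2 by (simp add: add.commute)
      ultimately show ?thesis using two_pt[OF L _ _ ] False by metis
    qed
  qed
qed

lemma gen_ideal_mem: "f \<in> S \<Longrightarrow> f \<in> gen_ideal S"
  unfolding gen_ideal_def by (rule CollectI, rule exI[of _ "{f}"], rule exI[of _ "\<lambda>_. 1"]) simp

lemma pos_neg_ne: "y \<noteq> 0 \<Longrightarrow> pos_part y \<noteq> neg_part y"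
proof
  assume "y \<noteq> 0" "pos_part y = neg_part y"
  then have h: "nat (y i) = nat (- y i)" for i unfolding pos_part_def neg_part_def by metis
  have "y i = 0" for i using h[of i] by linarith
  then show False using \<open>y \<noteq> 0\<close> by auto
qed

lemma K1:
  fixes L :: "('v::finite \<Rightarrow> int) set"
  assumes L: "is_lattice L" and z: "z \<in> L" "z \<noteq> 0"
  shows "\<exists>w. indispensable_monomial TYPE('k::field) L w \<and> (\<forall>i. w i \<le> pos_part z i)"
proof -
  define P where "P y \<longleftrightarrow> y \<in> L \<and> y \<noteq> 0 \<and> (\<forall>i. pos_part y i \<le> pos_part z i)" for y
  have "P z" using z unfolding P_def by simp
  from ex_has_least_nat[of P z "\<lambda>y. \<Sum>i\<in>UNIV. pos_part y i", OF this]
  obtain y0 where y0: "P y0" and ymin: "\<And>y. P y \<Longrightarrow> (\<Sum>i\<in>UNIV. pos_part y0 i) \<le> (\<Sum>i\<in>UNIV. pos_part y i)"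
    by blast
  define w where "w = pos_part y0"
  have minw: "pos_part y = w" if "y \<in> L" "y \<noteq> 0" "\<forall>i. pos_part y i \<le> w i" for y
  proof (rule ccontr)
    assume ne: "pos_part y \<noteq> w"
    have "\<forall>i. pos_part y i \<le> pos_part z i" using that(3) y0 unfolding P_def w_def by (meson le_trans)
    then have "P y" using that unfolding P_def by simp
    then have "(\<Sum>i\<in>UNIV. w i) \<le> (\<Sum>i\<in>UNIV. pos_part y i)" using ymin w_def by simp
    moreover obtain j where "pos_part y j \<noteq> w j" using ne by auto
    then have "pos_part y j < w j" using that(3) le_neq_implies_less by blast
    then have "(\<Sum>i\<in>UNIV. pos_part y i) < (\<Sum>i\<in>UNIV. w i)"
      using sum_strict_mono_ex1[of UNIV "pos_part y" w] that(3) by auto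
    ultimately show False by simp
  qed
  have "indispensable_monomial TYPE('k) L w"
    unfolding indispensable_monomial_def
  proof (intro allI impI)
    fix B :: "('v,'k) mpoly set"
    assume B: "(\<forall>b\<in>B. is_binomial b) \<and> gen_ideal B = lattice_ideal TYPE('k) L"
    have "binom y0 \<in> lattice_ideal TYPE('k) L"
      unfolding lattice_ideal_def using y0 P_def by (auto intro!: gen_ideal_mem)
    then have "binom y0 \<in> gen_ideal B" using B by simp
    then obtain F c where F: "finite F" "F \<subseteq> B" "binom y0 = (\<Sum>f\<in>F. c f * f)"
      unfolding gen_ideal_def by blast
    have "Poly_Mapping.lookup (binom y0 :: ('v,'k) mpoly) (Abs_poly_mapping w) = 1"
      using pos_neg_ne[of y0] y0 unfolding P_def binom_def monom_c_def w_def
      by (simp add: lookup_minus lookup_single when_def Abs_poly_mapping_inject)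
    then have "(\<Sum>f\<in>F. Poly_Mapping.lookup (c f * f) (Abs_poly_mapping w)) \<noteq> 0"
      using F(3) by (simp add: lookup_sum)
    then obtain f where f: "f \<in> F" "Poly_Mapping.lookup (c f * f) (Abs_poly_mapping w) \<noteq> 0"
      by (meson sum.not_neutral_contains_not_neutral)
    then have "Abs_poly_mapping w \<in> Poly_Mapping.keys (c f * f)" by (simp add: in_keys_iff)
    then obtain t a where ta: "a \<in> Poly_Mapping.keys f" "Abs_poly_mapping w = t + a"
      using keys_mult by blast
    have fB: "f \<in> B" using f F by blast
    then have fI: "f \<in> lattice_ideal TYPE('k) L" using B gen_ideal_mem by metis
    have ale: "\<And>i. Poly_Mapping.lookup a i \<le> w i"
    proof -
      fix i
      have "w i = Poly_Mapping.lookup (Abs_poly_mapping w) i" by simp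
      also have "\<dots> = Poly_Mapping.lookup t i + Poly_Mapping.lookup a i" using ta(2) by (simp add: lookup_add)
      finally show "Poly_Mapping.lookup a i \<le> w i" by simp
    qed
    obtain y where y: "y \<in> L" "y \<noteq> 0" "\<forall>i. pos_part y i \<le> Poly_Mapping.lookup a i"
      using binomial_in_ideal[OF L fI _, of a] B fB ta(1) by (auto simp: in_keys_iff)
    have "\<forall>i. pos_part y i \<le> w i" using y(3) ale by (meson le_trans)
    then have "pos_part y = w" using minw y by blast
    then have "Poly_Mapping.lookup a = w" using y(3) ale by (intro ext antisym) auto
    then have "a = Abs_poly_mapping w" by (metis lookup_inverse)
    then show "\<exists>b\<in>B. Poly_Mapping.lookup b (Abs_poly_mapping w) \<noteq> 0"
      using fB ta(1) by (auto simp: in_keys_iff)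
  qed
  moreover have "\<forall>i. w i \<le> pos_part z i" using y0 unfolding P_def w_def by simp
  ultimately show ?thesis by blast
qed



definition conf :: "('v \<Rightarrow> int) \<Rightarrow> ('v \<Rightarrow> int) \<Rightarrow> bool" where
  "conf v y \<longleftrightarrow> (\<forall>i. (v i > 0 \<longrightarrow> y i > 0) \<and> (v i < 0 \<longrightarrow> y i < 0))"

lemma conf_refl: "conf v v" unfolding conf_def by simp
lemma conf_trans: "conf u v \<Longrightarrow> conf v y \<Longrightarrow> conf u y" unfolding conf_def by blast
lemma conf_supp: "conf u v \<Longrightarrow> vsupp u \<subseteq> vsupp v"
  unfolding conf_def vsupp_def by (auto simp: neq_iff)

lemma ker_lin:
  assumes "v \<in> kerZ a" "w \<in> kerZ a"
  shows "(\<lambda>i. \<alpha> * v i - \<beta> * w i) \<in> kerZ a"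
proof -
  { fix j
    have "(\<Sum>i\<in>UNIV. (\<alpha> * v i - \<beta> * w i) * a i j) = \<alpha> * (\<Sum>i\<in>UNIV. v i * a i j) - \<beta> * (\<Sum>i\<in>UNIV. w i * a i j)"
      by (simp add: sum_subtractf sum_distrib_left algebra_simps)
    also have "\<dots> = 0" using assms unfolding kerZ_def by simp
    finally have "(\<Sum>i\<in>UNIV. (\<alpha> * v i - \<beta> * w i) * a i j) = 0" . }
  then show ?thesis unfolding kerZ_def by simp
qed

lemma ker_div:
  assumes "v \<in> kerZ a" "g \<noteq> 0" "\<And>i. g dvd v i"
  shows "(\<lambda>i. v i div g) \<in> kerZ a"
proof -
  { fix j
    have "g * (\<Sum>i\<in>UNIV. (v i div g) * a i j) = (\<Sum>i\<in>UNIV. v i * a i j)"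
      by (simp add: sum_distrib_left assms(3) mult.assoc[symmetric])
    also have "\<dots> = 0" using assms unfolding kerZ_def by simp
    finally have "(\<Sum>i\<in>UNIV. (v i div g) * a i j) = 0" using assms(2) by simp }
  then show ?thesis unfolding kerZ_def by simp
qed

lemma Gcd_div_one:
  fixes u :: "'v \<Rightarrow> int"
  assumes "Gcd (range u) \<noteq> 0"
  shows "Gcd (range (\<lambda>i. u i div Gcd (range u))) = 1"
proof -
  let ?g = "Gcd (range u)" and ?h = "Gcd (range (\<lambda>i. u i div Gcd (range u)))"
  have gd: "\<And>i. ?g dvd u i" by (simp add: Gcd_dvd)
  have hg: "\<And>i. ?h * ?g dvd u i"
  proof -
    fix i
    have "?h dvd u i div ?g" by (simp add: Gcd_dvd)
    then have "?h * ?g dvd (u i div ?g) * ?g" by (rule mult_dvd_mono) simp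
    moreover have "(u i div ?g) * ?g = u i" using gd[of i] by (rule dvd_div_mult_self)
    ultimately show "?h * ?g dvd u i" by simp
  qed
  have "?h * ?g dvd ?g" by (rule Gcd_greatest) (use hg in blast)
  then have "?h dvd 1" using assms
    by (metis dvd_mult_cancel_right mult_1)
  then show ?thesis using Gcd_int_greater_eq_0[of "range (\<lambda>i. u i div Gcd (range u))"]
    by (simp add: zdvd1_eq)
qed

lemma reduce:
  fixes v w :: "'v::finite \<Rightarrow> int"
  assumes vk: "v \<in> kerZ a" and wk: "w \<in> kerZ a" and sub: "vsupp w \<subset> vsupp v"
    and pos: "\<exists>i. w i * v i > 0"
  shows "\<exists>v'\<in>kerZ a. v' \<noteq> 0 \<and> conf v' v \<and> vsupp v' \<subset> vsupp v"
proof -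
  define S where "S = {i. w i * v i > 0}"
  have fin: "finite S" by simp
  have ne: "S \<noteq> {}" using pos S_def by auto
  define r :: "'v \<Rightarrow> rat" where "r i = of_int \<bar>v i\<bar> / of_int \<bar>w i\<bar>" for i
  have "Min (r ` S) \<in> r ` S" using fin ne by simp
  then obtain i0 where i0: "i0 \<in> S" "r i0 = Min (r ` S)" by auto
  have min: "r i0 \<le> r i" if "i \<in> S" for i using i0 fin that by simp
  have wne: "w i0 \<noteq> 0" and vne: "v i0 \<noteq> 0" using i0 S_def by auto
  define A where "A = \<bar>w i0\<bar>"
  define B where "B = \<bar>v i0\<bar>"
  have A: "A > 0" using wne A_def by simp
  have B: "B > 0" using vne B_def by simp
  have ineq: "B * \<bar>w i\<bar> \<le> \<bar>v i\<bar> * A" if "i \<in> S" for i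
  proof -
    have hwi: "\<bar>w i\<bar> > 0" using that S_def by (auto simp: zero_less_mult_iff)
    have "(of_int (B * \<bar>w i\<bar>) :: rat) \<le> of_int (\<bar>v i\<bar> * A)"
      using min[OF that] hwi A unfolding r_def A_def B_def
      by (simp add: divide_simps)
    then show ?thesis by (simp only: of_int_le_iff)
  qed
  define v' where "v' = (\<lambda>i. A * v i - B * w i)"
  have v'k: "v' \<in> kerZ a" unfolding v'_def by (rule ker_lin[OF vk wk])
  have wv: "v i \<noteq> 0" if "w i \<noteq> 0" for i using sub that unfolding vsupp_def by auto
  have cf: "conf v' v"
    unfolding conf_def
  proof
    fix i
    show "(v' i > 0 \<longrightarrow> v i > 0) \<and> (v' i < 0 \<longrightarrow> v i < 0)"
    proof (cases "w i = 0")
      case True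
      then show ?thesis using A unfolding v'_def by (auto simp: zero_less_mult_iff mult_less_0_iff)
    next
      case False
      then have vi: "v i \<noteq> 0" using wv by blast
      show ?thesis
      proof (cases "v i > 0")
        case vp: True
        show ?thesis
        proof (cases "w i > 0")
          case True
          then have "i \<in> S" using vp S_def by simp
          then have "B * w i \<le> v i * A" using ineq True vp by fastforce
          moreover have "v i * A = A * v i" by (simp add: mult.commute)
          ultimately have "v' i \<ge> 0" unfolding v'_def by linarith
          then show ?thesis using vp by simp
        next
          case False
          then have "w i < 0" using \<open>w i \<noteq> 0\<close> by simp
          then have "B * w i < 0" using B by (simp add: mult_pos_neg)
          moreover have "A * v i > 0" using A vp by simp
          ultimately have "v' i > 0" unfolding v'_def by linarith
          then show ?thesis using vp by simp
        qed
      next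
        case vn: False
        then have vn: "v i < 0" using vi by simp
        show ?thesis
        proof (cases "w i > 0")
          case True
          then have "B * w i > 0" using B by simp
          moreover have "A * v i < 0" using A vn by (simp add: mult_pos_neg)
          ultimately have "v' i < 0" unfolding v'_def by linarith
          then show ?thesis using vn by simp
        next
          case False
          then have wn: "w i < 0" using \<open>w i \<noteq> 0\<close> by simp
          then have "i \<in> S" using vn S_def by (simp add: mult_neg_neg)
          then have "B * (- w i) \<le> (- v i) * A" using ineq wn vn by fastforce
          then have "v' i \<le> 0" unfolding v'_def by (simp add: algebra_simps)
          then show ?thesis using vn by simp
        qed
      qed
    qed
  qed
  have "v' i0 = 0"
    unfolding v'_def A_def B_def using i0(1) S_def
    by (cases "v i0 > 0"; cases "w i0 > 0") (auto simp: zero_less_mult_iff)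
  then have i0n: "i0 \<notin> vsupp v'" unfolding vsupp_def by simp
  have i0v: "i0 \<in> vsupp v" using vne unfolding vsupp_def by simp
  obtain j where j: "j \<in> vsupp v" "j \<notin> vsupp w" using sub by blast
  have "v' j \<noteq> 0" using j A unfolding v'_def vsupp_def by simp
  then have "v' \<noteq> 0" by auto
  moreover have "vsupp v' \<subset> vsupp v" using conf_supp[OF cf] i0n i0v by blast
  ultimately show ?thesis using v'k cf by blast
qed

lemma conf_min:
  fixes a :: "'v::finite \<Rightarrow> 'w::finite \<Rightarrow> int"
  shows "v \<in> kerZ a \<Longrightarrow> v \<noteq> 0 \<Longrightarrow>
    \<exists>u\<in>kerZ a. u \<noteq> 0 \<and> conf u v \<and> \<not> (\<exists>w\<in>kerZ a. w \<noteq> 0 \<and> vsupp w \<subset> vsupp u)"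
proof (induction "card (vsupp v)" arbitrary: v rule: less_induct)
  case less
  show ?case
  proof (cases "\<exists>w\<in>kerZ a. w \<noteq> 0 \<and> vsupp w \<subset> vsupp v")
    case False
    then show ?thesis using less.prems conf_refl by blast
  next
    case True
    then obtain w where w: "w \<in> kerZ a" "w \<noteq> 0" "vsupp w \<subset> vsupp v" by blast
    have "\<exists>i. w i \<noteq> 0"
    proof (rule ccontr)
      assume "\<not> (\<exists>i. w i \<noteq> 0)"
      then have "w = 0" by (auto simp: fun_eq_iff)
      then show False using w(2) by simp
    qed
    then obtain i where wi: "w i \<noteq> 0" by blast
    then have vi: "v i \<noteq> 0" using w(3) unfolding vsupp_def by auto
    have "\<exists>w'\<in>kerZ a. vsupp w' \<subset> vsupp v \<and> (\<exists>i. w' i * v i > 0)"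
    proof (cases "w i * v i > 0")
      case True then show ?thesis using w by blast
    next
      case False
      then have "w i * v i < 0" using wi vi no_zero_divisors[of "w i" "v i"] by linarith
      moreover define w' where "w' = (\<lambda>i. 0 * v i - 1 * w i)"
      ultimately have "w' i * v i > 0" by simp
      moreover have "w' \<in> kerZ a" unfolding w'_def by (rule ker_lin[OF less.prems(1) w(1)])
      moreover have "vsupp w' = vsupp w" unfolding w'_def vsupp_def by simp
      ultimately show ?thesis using w(3) by (intro bexI[of _ w']) auto
    qed
    then obtain w' where w': "w' \<in> kerZ a" "vsupp w' \<subset> vsupp v" "\<exists>i. w' i * v i > 0" by blast
    from reduce[OF less.prems(1) w'] obtain v' where
      v': "v' \<in> kerZ a" "v' \<noteq> 0" "conf v' v" "vsupp v' \<subset> vsupp v" by blast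
    have "card (vsupp v') < card (vsupp v)" using v'(4) by (simp add: psubset_card_mono)
    from less.hyps[OF this v'(1,2)] obtain u where
      u: "u \<in> kerZ a" "u \<noteq> 0" "conf u v'" "\<not> (\<exists>w\<in>kerZ a. w \<noteq> 0 \<and> vsupp w \<subset> vsupp u)" by blast
    then show ?thesis using conf_trans[OF u(3) v'(3)] by blast
  qed
qed

lemma circuit_conf:
  fixes a :: "'v::finite \<Rightarrow> 'w::finite \<Rightarrow> int"
  assumes "v \<in> kerZ a" "v \<noteq> 0"
  shows "\<exists>u. is_circuit a u \<and> conf u v"
proof -
  from conf_min[OF assms] obtain u where
    u: "u \<in> kerZ a" "u \<noteq> 0" "conf u v" "\<not> (\<exists>w\<in>kerZ a. w \<noteq> 0 \<and> vsupp w \<subset> vsupp u)" by blast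
  define g where "g = Gcd (range u)"
  have g0: "g \<noteq> 0"
  proof
    assume "g = 0"
    then have "\<And>i. u i = 0" unfolding g_def by (auto simp: Gcd_0_iff)
    then have "u = 0" by (auto simp: fun_eq_iff)
    then show False using u(2) by simp
  qed
  then have gp: "g > 0" using Gcd_int_greater_eq_0[of "range u"] unfolding g_def by linarith
  have gd: "\<And>i. g dvd u i" unfolding g_def by (simp add: Gcd_dvd)
  define u' where "u' = (\<lambda>i. u i div g)"
  have ue: "u i = u' i * g" for i unfolding u'_def using gd[of i] by simp
  have k: "u' \<in> kerZ a" unfolding u'_def by (rule ker_div[OF u(1) g0 gd])
  have sv: "vsupp u' = vsupp u" unfolding vsupp_def using ue g0 by simp
  have cu: "conf u' u" unfolding conf_def
  proof (intro allI conjI impI)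
    fix i
    assume "u' i > 0" then show "u i > 0" using ue[of i] gp by simp
  next
    fix i
    assume "u' i < 0" then show "u i < 0" using ue[of i] gp by (simp add: mult_neg_pos)
  qed
  have "u' \<noteq> 0"
  proof
    assume "u' = 0"
    then have "vsupp u = {}" using sv unfolding vsupp_def by simp
    then have "\<And>i. u i = 0" unfolding vsupp_def by auto
    then have "u = 0" by (auto simp: fun_eq_iff)
    then show False using u(2) by simp
  qed
  moreover have "Gcd (range u') = 1" unfolding u'_def g_def by (rule Gcd_div_one) (use g0 g_def in simp)
  ultimately have "is_circuit a u'" unfolding is_circuit_def using k sv u(4) by simp
  then show ?thesis using conf_trans[OF cu u(3)] by blast
qed



lemma vsupp_pos: "vsupp (pos_part u) = {i. u i > 0}"
  unfolding vsupp_def pos_part_def by auto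
lemma vsupp_neg: "vsupp (neg_part u) = {i. u i < 0}"
  unfolding vsupp_def neg_part_def by auto

lemma part1:
  fixes L :: "('v::finite \<Rightarrow> int) set" and a :: "'v \<Rightarrow> 'w::finite \<Rightarrow> int"
  assumes L: "is_lattice L" and sat: "Sat L = kerZ a"
    and Emin: "\<not> (\<exists>E'\<in>{vsupp w | w. indispensable_monomial TYPE('k::field) L w}. E' \<subset> E)"
    and u: "u \<in> kerZ a" "u \<noteq> 0"
  shows "\<not> (vsupp (pos_part u) \<subset> E \<or> vsupp (neg_part u) \<subset> E)"
proof
  assume H: "vsupp (pos_part u) \<subset> E \<or> vsupp (neg_part u) \<subset> E"
  from u sat obtain d where d: "d \<noteq> 0" "(\<lambda>i. d * u i) \<in> L" unfolding Sat_def by blast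
  define z where "z = (\<lambda>i. \<bar>d\<bar> * u i)"
  have zL: "z \<in> L"
  proof (cases "d > 0")
    case True then show ?thesis using d unfolding z_def by simp
  next
    case False
    then have "- (\<lambda>i. d * u i) = z" using d unfolding z_def by (auto simp: fun_eq_iff)
    then show ?thesis using lattice_neg[OF L d(2)] by simp
  qed
  have dp: "\<bar>d\<bar> > 0" using d by simp
  have zp: "{i. z i > 0} = {i. u i > 0}" and zn: "{i. z i < 0} = {i. u i < 0}"
    unfolding z_def using dp by (auto simp: zero_less_mult_iff mult_less_0_iff)
  have z0: "z \<noteq> 0"
  proof
    assume "z = 0"
    then have "u i = 0" for i using dp unfolding z_def by (metis mult_eq_0_iff zero_fun_def less_irrefl)
    then have "u = 0" by (auto simp: fun_eq_iff)
    then show False using u by simp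
  qed
  have mz: "- z \<in> L" "- z \<noteq> 0" using lattice_neg[OF L zL] z0 by auto
  have "\<exists>z'\<in>L. z' \<noteq> 0 \<and> vsupp (pos_part z') \<subset> E"
  proof (cases "vsupp (pos_part u) \<subset> E")
    case True
    then have "vsupp (pos_part z) \<subset> E" using zp unfolding vsupp_pos by simp
    then show ?thesis using zL z0 by blast
  next
    case False
    then have "vsupp (neg_part u) \<subset> E" using H by blast
    moreover have "vsupp (pos_part (- z)) = vsupp (neg_part u)" unfolding vsupp_pos vsupp_neg
      using zn by auto
    ultimately have "vsupp (pos_part (- z)) \<subset> E" by simp
    then show ?thesis using mz by blast
  qed
  then obtain z' where z': "z' \<in> L" "z' \<noteq> 0" "vsupp (pos_part z') \<subset> E" by blast
  from K1[OF L z'(1,2), where 'k='k] obtain w where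
    w: "indispensable_monomial TYPE('k) L w" "\<forall>i. w i \<le> pos_part z' i" by blast
  have "vsupp w \<subseteq> vsupp (pos_part z')" using w(2) unfolding vsupp_def
    by (auto simp: le_zero_eq) (metis less_le_trans)
  then have "vsupp w \<subset> E" using z'(3) by blast
  then show False using Emin w(1) by blast
qed

theorem lemma2p5:
  fixes L :: "('v::finite \<Rightarrow> int) set"
    and a :: "'v \<Rightarrow> 'w::finite \<Rightarrow> int"
    and E :: "'v set"
  assumes "is_lattice L"
    and "L \<noteq> {0}"
    and "{u \<in> L. \<forall>i. u i \<ge> 0} = {0}"
    and "Sat L = kerZ a"
    and "E \<in> T_min TYPE('k::field) L"
  shows "\<not> (\<exists>u. is_circuit a u \<and> (vsupp (pos_part u) \<subset> E \<or> vsupp (neg_part u) \<subset> E))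
     \<and> (\<exists>u. is_circuit a u \<and> (vsupp (pos_part u) = E \<or> vsupp (neg_part u) = E))"
proof -
  note L = assms(1) and sat = assms(4)
  have ES: "E \<in> {vsupp w | w. indispensable_monomial TYPE('k) L w}"
    and Emin: "\<not> (\<exists>E'\<in>{vsupp w | w. indispensable_monomial TYPE('k) L w}. E' \<subset> E)"
    using assms(5) unfolding T_min_def Let_def by blast+
  have P1: "\<not> (\<exists>u. is_circuit a u \<and> (vsupp (pos_part u) \<subset> E \<or> vsupp (neg_part u) \<subset> E))"
    using part1[OF L sat Emin] unfolding is_circuit_def by blast
  from ES obtain w0 where w0: "E = vsupp w0" "indispensable_monomial TYPE('k) L w0" by blast
  define B :: "('v,'k) mpoly set" where "B = {binom u | u. u \<in> L}"
  have Bb: "\<forall>b\<in>B. is_binomial b"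
  proof
    fix b assume "b \<in> B"
    then obtain u where "b = binom u" unfolding B_def by blast
    then have "b = monom_c (pos_part u) 1 + monom_c (neg_part u) (-1)"
      unfolding binom_def monom_c_def by (simp add: single_uminus)
    then show "is_binomial b" unfolding is_binomial_def by blast
  qed
  have "gen_ideal B = lattice_ideal TYPE('k) L" unfolding B_def lattice_ideal_def by simp
  then obtain b where b: "b \<in> B" "Poly_Mapping.lookup b (Abs_poly_mapping w0) \<noteq> 0"
    using w0(2) Bb unfolding indispensable_monomial_def by blast
  then obtain y where y: "y \<in> L" "b = binom y" unfolding B_def by blast
  have lk: "Poly_Mapping.lookup b (Abs_poly_mapping w0) =
      ((1::'k) when Abs_poly_mapping (pos_part y) = Abs_poly_mapping w0) - (1 when Abs_poly_mapping (neg_part y) = Abs_poly_mapping w0)"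
    unfolding y(2) binom_def monom_c_def by (simp add: lookup_minus lookup_single)
  have inj: "Abs_poly_mapping f = Abs_poly_mapping g \<longleftrightarrow> f = g" for f g :: "'v \<Rightarrow> nat"
    by (metis lookup_Abs_fin)
  have "\<exists>y'\<in>L. y' \<noteq> 0 \<and> vsupp (pos_part y') = E"
  proof (cases "pos_part y = w0")
    case True
    then have "neg_part y \<noteq> w0" using b(2) lk inj by (auto simp: when_def)
    then have "y \<noteq> 0" using True unfolding pos_part_def neg_part_def by auto
    then show ?thesis using y True w0 by blast
  next
    case False
    then have nw: "neg_part y = w0" using b(2) lk inj by (auto simp: when_def split: if_splits)
    then have "y \<noteq> 0" using False unfolding pos_part_def neg_part_def by auto
    then have "- y \<noteq> 0" by simp
    moreover have "pos_part (- y) = w0" using nw unfolding pos_part_def neg_part_def by (simp add: fun_eq_iff)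
    ultimately show ?thesis using lattice_neg[OF L y(1)] w0 by blast
  qed
  then obtain y' where y': "y' \<in> L" "y' \<noteq> 0" "vsupp (pos_part y') = E" by blast
  have "y' \<in> Sat L" unfolding Sat_def using y'(1) by (intro CollectI exI[of _ 1]) simp
  then have "y' \<in> kerZ a" using sat by simp
  from circuit_conf[OF this y'(2)] obtain u where u: "is_circuit a u" "conf u y'" by blast
  have "vsupp (pos_part u) \<subseteq> E" using u(2) y'(3) unfolding vsupp_pos conf_def by auto
  then have "vsupp (pos_part u) = E" using P1 u(1) by blast
  then have P2: "\<exists>u. is_circuit a u \<and> (vsupp (pos_part u) = E \<or> vsupp (neg_part u) = E)" using u(1) by blast
  show ?thesis using P1 P2 by blast
qed

end
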